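(* Suppose (A3) each $f_t(\cdot)=f(\cdot;\boldsymbol\xi_t)$ is $L_c$-Lipschitz continuous, $\max\{d,T\}\ge3$, and $\delta\in(0,1)$. Then with probability at least $1-\delta$, the ZO gradient estimates $\hat{\mathbf g}_t=\hat\nabla f_t(\mathbf x_t)$, $t=1,\dots,T$, generated by ZO-AdaMM satisfy \[ \max_{t\in[T]}\|\hat{\mathbf g}_t\|_\infty\le 2L_c\sqrt{d\log(dT/\delta)} . \]
   Context: For a function $h:\mathbb R^d\to\mathbb R$, $\mu>0$, the ZO gradient estimate is $\hat\nabla h(\mathbf x)=(d/\mu)[h(\mathbf x+\mu\mathbf u)-h(\mathbf x)]\mathbf u$, where $\mathbf u$ is drawn uniformly from the unit sphere in $\mathbb R^d$, independently at each iteration. ZO-AdaMM (for $\min_{\mathbf x\in\mathcal X}\mathbb E_{\boldsymbol\xi}[f(\mathbf x;\boldsymbol\xi)]$, $\mathcal X$ closed convex): given $\mathbf x_1\in\mathcal X$, $\alpha_t$, $\beta_{1,t},\beta_2\in(0,1]$, $\mathbf m_0,\mathbf v_0,\hat{\mathbf v}_0$, for $t=1,\dots,T$: $\hat{\mathbf g}_t=\hat\nabla f_t(\mathbf x_t)$; $\mathbf m_t=\beta_{1,t}\mathbf m_{t-1}+(1-\beta_{1,t})\hat{\mathbf g}_t$; $\mathbf v_t=\beta_2\mathbf v_{t-1}+(1-\beta_2)\hat{\mathbf g}_t^2$; $\hat{\mathbf v}_t=\max(\hat{\mathbf v}_{t-1},\mathbf v_t)$, $\hat{\mathbf V}_t=\mathrm{diag}(\hat{\mathbf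 v}_t)$; $\mathbf x_{t+1}=\Pi_{\mathcal X,\sqrt{\hat{\mathbf V}_t}}(\mathbf x_t-\alpha_t\hat{\mathbf V}_t^{-1/2}\mathbf m_t)$, with elementwise operations and $\Pi_{\mathcal X,\mathbf H}(\mathbf a)=\arg\min_{\mathbf x\in\mathcal X}\|\sqrt{\mathbf H}(\mathbf x-\mathbf a)\|_2^2$. *)

theory Defs
  imports "HOL-Analysis.Analysis" "HOL-Probability.Probability"
begin

text \<open>Uniform distribution on the unit sphere of R^d (d = CARD('n)):
  the radial projection of the uniform distribution on the open unit ball.\<close>
definition unif_sphere :: "(real ^ 'n) measure" where
  "unif_sphere = distr (uniform_measure lborel (ball 0 1)) borel (\<lambda>x. x /\<^sub>R norm x)"

definition zo_grad :: "real \<Rightarrow> (real ^ 'n \<Rightarrow> real) \<Rightarrow> real ^ 'n \<Rightarrow> real ^ 'n \<Rightarrow> real ^ 'n" where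
  "zo_grad mu h x u = (real CARD('n) / mu * (h (x + mu *\<^sub>R u) - h x)) *\<^sub>R u"

definition wproj :: "(real ^ 'n) set \<Rightarrow> real ^ 'n \<Rightarrow> real ^ 'n \<Rightarrow> real ^ 'n" where
  "wproj X hh a = (SOME x. x \<in> X \<and>
     (\<forall>y\<in>X. (norm (\<chi> i. sqrt (hh $ i) * (x $ i - a $ i)))\<^sup>2
              \<le> (norm (\<chi> i. sqrt (hh $ i) * (y $ i - a $ i)))\<^sup>2))"

text \<open>ZO-AdaMM state: zo_adamm_state ... k = (x_{k+1}, m_k, v_k, vhat_k).
  f t is f_t, u t is the direction u_t, alpha t, beta1 t the step sizes / momentum.\<close>
fun zo_adamm_state ::
  "(nat \<Rightarrow> real ^ 'n \<Rightarrow> real) \<Rightarrow> (real ^ 'n) set \<Rightarrow> real \<Rightarrow> (nat \<Rightarrow> real) \<Rightarrow> (nat \<Rightarrow> real) \<Rightarrow> real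
   \<Rightarrow> real ^ 'n \<Rightarrow> real ^ 'n \<Rightarrow> real ^ 'n \<Rightarrow> real ^ 'n \<Rightarrow> (nat \<Rightarrow> real ^ 'n) \<Rightarrow> nat
   \<Rightarrow> (real ^ 'n) \<times> (real ^ 'n) \<times> (real ^ 'n) \<times> (real ^ 'n)" where
  "zo_adamm_state f X mu alpha beta1 beta2 x1 m0 v0 vh0 u 0 = (x1, m0, v0, vh0)"
| "zo_adamm_state f X mu alpha beta1 beta2 x1 m0 v0 vh0 u (Suc k) =
    (let (x, m, v, vh) = zo_adamm_state f X mu alpha beta1 beta2 x1 m0 v0 vh0 u k;
         t = Suc k;
         g = zo_grad mu (f t) x (u t);
         m' = beta1 t *\<^sub>R m + (1 - beta1 t) *\<^sub>R g;
         v' = beta2 *\<^sub>R v + (1 - beta2) *\<^sub>R (\<chi> i. (g $ i)\<^sup>2);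
         vh' = (\<chi> i. max (vh $ i) (v' $ i));
         x' = wproj X (\<chi> i. sqrt (vh' $ i))
                (x - alpha t *\<^sub>R (\<chi> i. m' $ i / sqrt (vh' $ i)))
     in (x', m', v', vh'))"

definition zo_adamm_grad where
  "zo_adamm_grad f X mu alpha beta1 beta2 x1 m0 v0 vh0 u t =
     zo_grad mu (f t) (fst (zo_adamm_state f X mu alpha beta1 beta2 x1 m0 v0 vh0 u (t - 1))) (u t)"

end

theory Submission imports Defs begin

lemma exp_ineq2:
  fixes y :: real assumes "1/2 \<le> y" "y \<le> 1"
  shows "1 / (4*y) \<le> exp (-y)"
proof -
  have e1: "exp (1/2::real) \<le> 2"
  proof -
    have "exp (1/2::real) ^ 2 = exp 1" by (simp add: exp_of_nat_mult[symmetric])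
    also have "\<dots> \<le> 4" using exp_le by simp
    finally have "exp (1/2::real) ^ 2 \<le> 2^2" by simp
    thus ?thesis by (rule power2_le_imp_le) simp
  qed
  have e2: "exp (-(y - 1/2)) \<ge> 3/2 - y" using exp_ge_add_one_self[of "-(y-1/2)"] by simp
  have "exp y = exp (1/2) / exp (-(y-1/2))" by (simp add: exp_minus field_simps flip: exp_add)
  also have "\<dots> \<le> 2 / (3/2 - y)"
    using e1 e2 assms by (intro frac_le) auto
  also have "\<dots> \<le> 4 * y"
  proof -
    have p: "0 < 3/2 - y" using assms by simp
    have "(2*y - 1) * (1 - y) \<ge> 0" using assms by simp
    hence "2 \<le> 4*y*(3/2 - y)" by (simp add: algebra_simps)
    thus ?thesis using p by (simp add: divide_le_eq)
  qed
  finally have "exp y \<le> 4*y" .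
  thus ?thesis using assms by (simp add: exp_minus field_simps)
qed

definition capc :: "real \<Rightarrow> real" where "capc z = (if z\<^sup>2 \<le> 1/2 then z else 1/(2*z))"
definition capR :: "real \<Rightarrow> real" where "capR z = (if z\<^sup>2 \<le> 1/2 then sqrt (1 - z\<^sup>2) else 1/(2*z))"

lemma capR_bound:
  assumes "0 \<le> s" "s \<le> 1"
  shows "capR s \<ge> 0" "(capR s)\<^sup>2 \<le> exp (- s\<^sup>2)"
proof -
  show "capR s \<ge> 0" using assms by (auto simp: capR_def)
  show "(capR s)\<^sup>2 \<le> exp (- s\<^sup>2)"
  proof (cases "s\<^sup>2 \<le> 1/2")
    case True
    have "s\<^sup>2 \<le> 1" using True by simp
    then show ?thesis using True exp_ge_add_one_self[of "- s\<^sup>2"] by (simp add: capR_def)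
  next
    case False
    have "s\<^sup>2 \<le> 1" using assms by (simp add: power_le_one)
    have "1 / (4 * s\<^sup>2) \<le> exp (- s\<^sup>2)" using False \<open>s\<^sup>2 \<le> 1\<close> by (intro exp_ineq2) auto
    then show ?thesis using False by (simp add: capR_def power_divide power_mult_distrib)
  qed
qed

lemma cap_in_ball:
  fixes x :: "real ^ 'n" and s :: real and sg :: real
  assumes s: "0 \<le> s" "s \<le> 1" and x: "norm x \<le> 1" and sg: "sg = 1 \<or> sg = -1"
    and cone: "s * norm x \<le> sg * x $ i"
  shows "x \<in> cball ((sg * capc s) *\<^sub>R axis i 1) (capR s)"
proof -
  let ?c = "capc s" and ?y = "(sg * capc s) *\<^sub>R axis i (1::real)" and ?r = "norm x"
  have c0: "?c \<ge> 0" using s by (auto simp: capc_def)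
  have sg2: "sg * sg = 1" using sg by auto
  have eq: "(norm (x - ?y))\<^sup>2 = ?r\<^sup>2 - 2 * ?c * (sg * x $ i) + ?c\<^sup>2"
  proof -
    have "(norm (x - ?y))\<^sup>2 = (x - ?y) \<bullet> (x - ?y)" by (simp add: power2_norm_eq_inner)
    also have "\<dots> = x \<bullet> x - 2 * (x \<bullet> ?y) + ?y \<bullet> ?y"
      by (simp add: inner_diff_left inner_diff_right inner_commute inner_axis_axis inner_real_def)
    finally have e1: "(norm (x - ?y))\<^sup>2 = ?r\<^sup>2 - 2 * (x \<bullet> ?y) + (norm ?y)\<^sup>2"
      by (simp only: power2_norm_eq_inner)
    have e2: "x \<bullet> ?y = sg * ?c * x $ i" by (simp add: inner_axis)
    have "norm ?y = ?c" using sg c0 by auto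
    hence e3: "(norm ?y)\<^sup>2 = ?c\<^sup>2" by simp
    show ?thesis unfolding e1 e2 e3 by (simp add: algebra_simps)
  qed
  have "?r\<^sup>2 \<le> ?r" using x mult_left_le[of "norm x" "norm x"] by (simp add: power2_eq_square)
  have "2 * ?c * (s * ?r) \<le> 2 * ?c * (sg * x $ i)" using cone c0 by (intro mult_left_mono) auto
  hence le1: "(norm (x - ?y))\<^sup>2 \<le> ?r * (1 - 2 * ?c * s) + ?c\<^sup>2"
  proof -
    have "?r * (1 - 2*?c* s) = ?r - 2*?c*(s*?r)" by (simp add: algebra_simps)
    thus ?thesis using eq \<open>?r\<^sup>2 \<le> ?r\<close> \<open>2 * ?c * (s * ?r) \<le> 2 * ?c * (sg * x $ i)\<close> by linarith
  qed
  have le2: "?r * (1 - 2 * ?c * s) + ?c\<^sup>2 \<le> (capR s)\<^sup>2"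
  proof (cases "s\<^sup>2 \<le> 1/2")
    case True
    hence "0 \<le> 1 - 2 * s * s" by (simp add: power2_eq_square)
    hence "?r * (1 - 2 * s * s) \<le> 1 * (1 - 2 * s * s)" using x by (intro mult_right_mono) auto
    moreover have "s\<^sup>2 \<le> 1" using True by simp
    ultimately have "?r * (1 - 2 * s * s) + s\<^sup>2 \<le> 1 - s\<^sup>2" by (simp add: power2_eq_square)
    moreover have "(capR s)\<^sup>2 = 1 - s\<^sup>2" using True \<open>s\<^sup>2 \<le> 1\<close> by (simp add: capR_def)
    moreover have "?c = s" using True by (simp add: capc_def)
    ultimately show ?thesis by (simp add: mult.assoc)
  next
    case False
    hence "s > 0" using s by (cases "s = 0") auto
    then show ?thesis using False by (simp add: capc_def capR_def)
  qed
  have "(norm (x - ?y))\<^sup>2 \<le> (capR s)\<^sup>2" using le1 le2 by (rule order_trans)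
  hence "norm (x - ?y) \<le> capR s" by (rule power2_le_imp_le[OF _ capR_bound(1)[OF s]])
  hence "dist x ?y \<le> capR s" by (simp only: dist_norm)
  thus ?thesis unfolding mem_cball using dist_commute[of ?y x] by linarith
qed

lemma ubv_ne: "unit_ball_vol (real CARD('n::finite)) \<noteq> 0"
proof -
  have "0 \<le> real CARD('n)" by simp
  from unit_ball_vol_pos[OF this] show ?thesis by linarith
qed

lemma cball_fmeas: "cball (c::real^'n) R \<in> fmeasurable lborel"
  by (rule fmeasurableI[OF _ emeasure_bounded_finite]) auto

lemma ball_emeasure:
  "emeasure lborel (ball (0::real^'n) 1) = ennreal (unit_ball_vol (real CARD('n)))"
  using emeasure_ball[of 1 "0::real^'n"] by simp

lemma ball_measure:
  "measure lborel (ball (0::real^'n) 1) = unit_ball_vol (real CARD('n))"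
  by (simp add: measure_def ball_emeasure)

lemma cball_measure:
  assumes "R \<ge> 0"
  shows "measure lborel (cball (c::real^'n::finite) R) = unit_ball_vol (real CARD('n)) * R ^ CARD('n)"
  using content_cball[OF assms, of c] by simp

lemma g_meas: "(\<lambda>x::real^'n. x /\<^sub>R norm x) \<in> borel_measurable borel"
  by measurable

lemma prob_UM: "prob_space (uniform_measure lborel (ball (0::real^'n) 1))"
proof (rule prob_space_uniform_measure)
  have "unit_ball_vol (real CARD('n)) > 0" by (rule unit_ball_vol_pos) simp
  thus "emeasure lborel (ball (0::real^'n) 1) \<noteq> 0" unfolding ball_emeasure by (simp del: unit_ball_vol_pos)
  show "emeasure lborel (ball (0::real^'n) 1) \<noteq> \<infinity>" unfolding ball_emeasure by simp
qed

lemma prob_sphere: "prob_space (unif_sphere :: (real^'n) measure)"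
proof -
  interpret UM: prob_space "uniform_measure lborel (ball (0::real^'n) 1)" by (rule prob_UM)
  show ?thesis unfolding unif_sphere_def
    proof (rule UM.prob_space_distr)
    have "sets (uniform_measure lborel (ball (0::real^'n) 1)) = sets borel" by simp
    thus "(\<lambda>x::real^'n. x /\<^sub>R norm x) \<in> uniform_measure lborel (ball 0 1) \<rightarrow>\<^sub>M borel"
      using measurable_cong_sets[of _ borel borel borel] g_meas by blast
  qed
qed

lemma capR_pow:
  assumes "0 \<le> s" "s \<le> 1"
  shows "capR s ^ n \<le> exp (- real n * s\<^sup>2 / 2)"
proof -
  have "(capR s)\<^sup>2 \<le> (exp (- s\<^sup>2 / 2))\<^sup>2"
    using capR_bound(2)[OF assms] by (simp add: exp_of_nat_mult[symmetric])
  hence "capR s \<le> exp (- s\<^sup>2 / 2)" by (rule power2_le_imp_le) simp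
  hence "capR s ^ n \<le> exp (- s\<^sup>2 / 2) ^ n" by (rule power_mono) (rule capR_bound(1)[OF assms])
  also have "\<dots> = exp (- real n * s\<^sup>2 / 2)" by (simp add: exp_of_nat_mult[symmetric])
  finally show ?thesis .
qed

lemma cone_cover:
  fixes i :: "'n::finite" and s :: real
  assumes "0 \<le> s" "s \<le> 1"
  shows "ball (0::real^'n) 1 \<inter> {x. s * norm x \<le> \<bar>x $ i\<bar>} \<subseteq>
     cball ((1 * capc s) *\<^sub>R axis i 1) (capR s) \<union> cball ((-1 * capc s) *\<^sub>R axis i 1) (capR s)"
proof
  fix x :: "real^'n" assume x: "x \<in> ball 0 1 \<inter> {x. s * norm x \<le> \<bar>x $ i\<bar>}"
  hence n: "norm x \<le> 1" and c: "s * norm x \<le> \<bar>x $ i\<bar>" by auto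
  show "x \<in> cball ((1 * capc s) *\<^sub>R axis i 1) (capR s) \<union> cball ((-1 * capc s) *\<^sub>R axis i 1) (capR s)"
  proof (cases "x $ i \<ge> 0")
    case True
    hence "s * norm x \<le> 1 * x $ i" using c by simp
    from cap_in_ball[OF assms n _ this] show ?thesis by simp
  next
    case False
    hence "s * norm x \<le> -1 * x $ i" using c by simp
    from cap_in_ball[OF assms n _ this] show ?thesis by simp
  qed
qed

lemma sphere_tail:
  fixes i :: "'n::finite" and s :: real
  assumes s0: "0 \<le> s"
  shows "measure (unif_sphere :: (real^'n) measure) {v. 1 < norm v \<or> s < \<bar>v $ i\<bar>}
           \<le> 2 * exp (- real CARD('n) * s\<^sup>2 / 2)"
proof -
  let ?B = "ball (0::real^'n) 1"
  let ?UM = "uniform_measure lborel ?B"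
  let ?g = "\<lambda>x::real^'n. x /\<^sub>R norm x"
  let ?S = "{v::real^'n. 1 < norm v \<or> s < \<bar>v $ i\<bar>}"
  interpret UM: prob_space ?UM by (rule prob_UM)
  have gm: "?g \<in> ?UM \<rightarrow>\<^sub>M borel"
    using measurable_cong_sets[of ?UM borel borel borel] g_meas by simp
  have Sm: "?S \<in> sets borel" by measurable
  have "measure (unif_sphere :: (real^'n) measure) ?S = measure ?UM (?g -` ?S \<inter> space ?UM)"
    unfolding unif_sphere_def by (rule measure_distr[OF gm Sm])
  also have "\<dots> \<le> 2 * exp (- real CARD('n) * s\<^sup>2 / 2)"
  proof (cases "s \<le> 1")
    case False
    have "?g -` ?S = {}"
    proof -
      have "\<not> (1 < norm (?g x) \<or> s < \<bar>?g x $ i\<bar>)" for x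
      proof -
        have "norm (?g x) \<le> 1" by (cases "x = 0") auto
        moreover have "\<bar>?g x $ i\<bar> \<le> norm (?g x)" by (rule component_le_norm_cart)
        ultimately show ?thesis using False by linarith
      qed
      thus ?thesis by auto
    qed
    thus ?thesis by simp
  next
    case True
    let ?C = "{x::real^'n. s * norm x \<le> \<bar>x $ i\<bar>}"
    have Cm: "?C \<in> sets lborel" by measurable
    have sub: "?g -` ?S \<inter> space ?UM \<subseteq> ?C"
    proof
      fix x assume "x \<in> ?g -` ?S \<inter> space ?UM"
      hence x: "1 < norm (?g x) \<or> s < \<bar>?g x $ i\<bar>" by simp
      show "x \<in> ?C"
      proof (cases "x = 0")
        case True thus ?thesis using x s0 by simp
      next
        case False
        hence nz: "norm x > 0" by simp
        have "norm (?g x) = 1" using False by simp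
        hence "s < \<bar>?g x $ i\<bar>" using x by simp
        also have "\<bar>?g x $ i\<bar> = \<bar>x $ i\<bar> / norm x" by (simp add: abs_mult divide_inverse mult.commute)
        finally have "s * norm x < \<bar>x $ i\<bar>" using nz by (simp add: less_divide_eq)
        thus ?thesis by simp
      qed
    qed
    have "measure ?UM (?g -` ?S \<inter> space ?UM) \<le> measure ?UM ?C"
      by (rule UM.finite_measure_mono[OF sub]) (simp add: Cm)
    also have "\<dots> = measure lborel (?B \<inter> ?C) / measure lborel ?B"
      by (rule measure_uniform_measure) (simp_all add: ball_emeasure Cm ubv_ne)
    also have "\<dots> \<le> 2 * capR s ^ CARD('n)"
    proof -
      let ?c1 = "cball ((1 * capc s) *\<^sub>R axis i 1) (capR s) :: (real^'n) set"
      let ?c2 = "cball ((-1 * capc s) *\<^sub>R axis i 1) (capR s) :: (real^'n) set"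
      have R0: "capR s \<ge> 0" by (rule capR_bound(1)[OF s0 True])
      have V: "unit_ball_vol (real CARD('n)) > 0" by (rule unit_ball_vol_pos) simp
      have "measure lborel (?B \<inter> ?C) \<le> measure lborel (?c1 \<union> ?c2)"
        by (rule measure_mono_fmeasurable[OF cone_cover[OF s0 True]]) (auto simp: Cm intro!: fmeasurable.Un cball_fmeas)
      also have "\<dots> \<le> measure lborel ?c1 + measure lborel ?c2"
        by (rule measure_Un_le) auto
      also have "\<dots> = 2 * (unit_ball_vol (real CARD('n)) * capR s ^ CARD('n))"
        using cball_measure[OF R0, where 'n='n] by simp
      finally have "measure lborel (?B \<inter> ?C) \<le> 2 * (unit_ball_vol (real CARD('n)) * capR s ^ CARD('n))" .
      thus ?thesis using V by (simp add: ball_measure divide_le_eq mult.commute mult.left_commute)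
    qed
    also have "\<dots> \<le> 2 * exp (- real CARD('n) * s\<^sup>2 / 2)"
      using capR_pow[OF s0 True] by simp
    finally show ?thesis .
  qed
  finally show ?thesis .
qed

theorem proposition3:
  fixes f :: "nat \<Rightarrow> real ^ 'n \<Rightarrow> real"
    and X :: "(real ^ 'n) set"
    and x1 m0 v0 vh0 :: "real ^ 'n"
    and mu Lc beta2 delta :: real
    and alpha beta1 :: "nat \<Rightarrow> real"
    and T :: nat
  assumes "closed X" and "convex X" and "x1 \<in> X"
    and "mu > 0"
    and "\<And>t. beta1 t \<in> {0<..1}" and "beta2 \<in> {0<..1}"
    and "\<And>t. Lc-lipschitz_on UNIV (f t)"
    and "max CARD('n) T \<ge> 3"
    and "delta \<in> {0<..<1}"
  shows "\<exists>A \<in> sets (PiM {1..T} (\<lambda>_. unif_sphere)).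
           measure (PiM {1..T} (\<lambda>_. unif_sphere)) A \<ge> 1 - delta \<and>
           (\<forall>u\<in>A. \<forall>t\<in>{1..T}.
              infnorm (zo_adamm_grad f X mu alpha beta1 beta2 x1 m0 v0 vh0 u t)
                \<le> 2 * Lc * sqrt (real CARD('n) * ln (real CARD('n) * real T / delta)))"
proof -
  let ?d = "CARD('n)"
  let ?P = "PiM {1..T} (\<lambda>_. unif_sphere) :: (nat \<Rightarrow> real^'n) measure"
  interpret P: prob_space ?P by (rule prob_space_PiM) (rule prob_sphere)
  have Lc0: "0 \<le> Lc" using assms(7)[of 0] by (rule lipschitz_on_nonneg)
  have dl: "0 < delta" "delta < 1" using assms(9) by auto
  show ?thesis
  proof (cases "T = 0")
    case True
    have m1: "measure ?P (space ?P) = 1" by (rule P.prob_space)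
    show ?thesis
      using m1 dl True by (intro bexI[of _ "space ?P"]) auto
  next
    case False
    have d1: "real ?d \<ge> 1" by simp
    have T1: "real T \<ge> 1" using False by simp
    have dT3: "real ?d * real T \<ge> 3"
    proof -
      have o: "real ?d \<ge> 3 \<or> real T \<ge> 3" using assms(8) by (auto simp: max_def split: if_splits)
      moreover have "real ?d \<le> real ?d * real T" "real T \<le> real ?d * real T"
        using d1 T1 by (simp_all add: mult_le_cancel_left1 mult_le_cancel_right1)
      ultimately show ?thesis using o by linarith
    qed
    define L where "L = ln (real ?d * real T / delta)"
    define s where "s = 2 * sqrt (L / real ?d)"
    have pos: "real ?d * real T / delta > 0" using dT3 dl by simp
    have expL: "exp L = real ?d * real T / delta" unfolding L_def using pos by simp
    have "real ?d * real T / delta \<ge> 1" using dT3 dl by (simp add: le_divide_eq)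
    hence L0: "L \<ge> 0" unfolding L_def by simp
    have s0: "s \<ge> 0" unfolding s_def using L0 by simp
    have "s\<^sup>2 = 4 * (L / real ?d)" unfolding s_def using L0 by (simp add: power_mult_distrib)
    hence s2: "real ?d * s\<^sup>2 / 2 = 2 * L" using d1 by simp
    have ebound: "2 * exp (- real ?d * s\<^sup>2 / 2) \<le> delta / (real ?d * real T)"
    proof -
      have "exp (- real ?d * s\<^sup>2 / 2) = exp (- (2 * L))" using s2 by simp
      also have "\<dots> = (delta / (real ?d * real T))\<^sup>2"
      proof -
        have "exp (2 * L) = (exp L)\<^sup>2" by (simp add: power2_eq_square flip: exp_add)
        hence "exp (- (2 * L)) = inverse ((real ?d * real T / delta)\<^sup>2)" by (simp add: exp_minus expL)
        also have "\<dots> = (delta / (real ?d * real T))\<^sup>2" by (simp add: power_inverse[symmetric])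
        finally show ?thesis .
      qed
      finally have e: "exp (- real ?d * s\<^sup>2 / 2) = (delta / (real ?d * real T))\<^sup>2" .
      have q: "0 \<le> delta / (real ?d * real T)" using dl dT3 by simp
      have "2 * (delta / (real ?d * real T)) \<le> 1" using dl dT3 by (simp add: divide_le_eq)
      hence "2 * (delta / (real ?d * real T)) * (delta / (real ?d * real T)) \<le> 1 * (delta / (real ?d * real T))"
        using q by (intro mult_right_mono) auto
      thus ?thesis unfolding e by (simp add: power2_eq_square mult.assoc)
    qed
    define S where "S i = {v::real^'n. 1 < norm v \<or> s < \<bar>v $ i\<bar>}" for i
    define E where "E p = {u \<in> space ?P. u (fst p) \<in> S (snd p)}" for p
    let ?I = "{1..T} \<times> (UNIV :: 'n set)"
    define A where "A = space ?P - (\<Union>p\<in>?I. E p)"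
    have su: "sets unif_sphere = sets (borel :: (real^'n) measure)" unfolding unif_sphere_def by simp
    have Ssets: "S i \<in> sets unif_sphere" for i
      unfolding su S_def by measurable
    have Eeq: "E (t, i) = (\<lambda>u. u t) -` S i \<inter> space ?P" for t i
      unfolding E_def by auto
    have Em: "E p \<in> sets ?P" if pI: "p \<in> ?I" for p
    proof -
      obtain t i where p: "p = (t, i)" and t: "t \<in> {1..T}" using pI by (cases p) auto
      have "(\<lambda>u. u t) \<in> ?P \<rightarrow>\<^sub>M unif_sphere" by (rule measurable_component_singleton[OF t])
      thus ?thesis unfolding p Eeq using Ssets by (rule measurable_sets)
    qed
    have Emeas: "measure ?P (E p) \<le> delta / (real ?d * real T)" if pI: "p \<in> ?I" for p
    proof -
      obtain t i where p: "p = (t, i)" and t: "t \<in> {1..T}" using pI by (cases p) auto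
      have cm: "(\<lambda>u. u t) \<in> ?P \<rightarrow>\<^sub>M unif_sphere" by (rule measurable_component_singleton[OF t])
      have "measure ?P (E p) = measure (distr ?P unif_sphere (\<lambda>u. u t)) (S i)"
        unfolding p Eeq by (rule measure_distr[OF cm Ssets, symmetric])
      also have "distr ?P unif_sphere (\<lambda>u. u t) = unif_sphere"
        by (rule distr_PiM_component[OF prob_sphere t])
      also have "measure unif_sphere (S i) \<le> 2 * exp (- real ?d * s\<^sup>2 / 2)"
        unfolding S_def by (rule sphere_tail[OF s0])
      finally show ?thesis using ebound by linarith
    qed
    have Um: "(\<Union>p\<in>?I. E p) \<in> sets ?P" using Em by blast
    have "measure ?P (\<Union>p\<in>?I. E p) \<le> (\<Sum>p\<in>?I. measure ?P (E p))"
      by (rule P.finite_measure_subadditive_finite) (use Em in auto)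
    also have "\<dots> \<le> (\<Sum>p\<in>?I. delta / (real ?d * real T))"
      by (rule sum_mono) (rule Emeas)
    also have "\<dots> = real (card ?I) * (delta / (real ?d * real T))" by simp
    also have "card ?I = T * ?d" by (simp add: card_cartesian_product)
    also have "real (T * ?d) * (delta / (real ?d * real T)) = delta" using dT3 False by simp
    finally have Ub: "measure ?P (\<Union>p\<in>?I. E p) \<le> delta" .
    have Ameas: "measure ?P A \<ge> 1 - delta"
      unfolding A_def using P.prob_compl[OF Um] Ub by simp
    have Asets: "A \<in> sets ?P" unfolding A_def using Um by blast
    show ?thesis
    proof (intro bexI[of _ A] conjI Ameas ballI)
      show "A \<in> sets ?P" by (rule Asets)
    next
      fix u t assume uA: "u \<in> A" and t: "t \<in> {1..T}"
      have nS: "u t \<notin> S i" for i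
      proof
        assume "u t \<in> S i"
        hence "u \<in> E (t, i)" using uA unfolding A_def E_def by auto
        thus False using uA t unfolding A_def by auto
      qed
      have nv: "norm (u t) \<le> 1" and ci: "\<And>i. \<bar>u t $ i\<bar> \<le> s"
        using nS unfolding S_def by (auto simp: not_less)
      define x where "x = fst (zo_adamm_state f X mu alpha beta1 beta2 x1 m0 v0 vh0 u (t - 1))"
      define k where "k = real ?d / mu * (f t (x + mu *\<^sub>R u t) - f t x)"
      have g: "zo_adamm_grad f X mu alpha beta1 beta2 x1 m0 v0 vh0 u t = k *\<^sub>R u t"
        unfolding zo_adamm_grad_def zo_grad_def k_def x_def by simp
      have "\<bar>f t (x + mu *\<^sub>R u t) - f t x\<bar> \<le> Lc * dist (x + mu *\<^sub>R u t) x"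
        using lipschitz_onD[OF assms(7)[of t], of "x + mu *\<^sub>R u t" x] by (simp add: dist_real_def)
      also have "dist (x + mu *\<^sub>R u t) x = mu * norm (u t)"
        using assms(4) by (simp add: dist_norm)
      also have "Lc * (mu * norm (u t)) \<le> Lc * mu"
        using Lc0 nv assms(4) mult_left_le[of "norm (u t)" mu] by (intro mult_left_mono) auto
      finally have fd: "\<bar>f t (x + mu *\<^sub>R u t) - f t x\<bar> \<le> Lc * mu" .
      have kb: "\<bar>k\<bar> \<le> real ?d * Lc"
      proof -
        have "\<bar>k\<bar> = real ?d / mu * \<bar>f t (x + mu *\<^sub>R u t) - f t x\<bar>"
          unfolding k_def using assms(4) by (simp add: abs_mult)
        also have "\<dots> \<le> real ?d / mu * (Lc * mu)"
          using fd assms(4) by (intro mult_left_mono) auto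
        also have "\<dots> = real ?d * Lc" using assms(4) by simp
        finally show ?thesis .
      qed
      have ib: "infnorm (u t) \<le> s"
        unfolding infnorm_cart by (rule cSup_least) (use ci in auto)
      have "infnorm (zo_adamm_grad f X mu alpha beta1 beta2 x1 m0 v0 vh0 u t) = \<bar>k\<bar> * infnorm (u t)"
        unfolding g by (rule infnorm_mul)
      also have "\<dots> \<le> (real ?d * Lc) * s"
        using kb ib by (intro mult_mono) (auto simp: infnorm_pos_le)
      also have "\<dots> = 2 * Lc * sqrt (real ?d * L)"
      proof -
        have "sqrt (real ?d * L) = sqrt ((real ?d)\<^sup>2 * (L / real ?d))"
          using d1 by (simp add: power2_eq_square)
        also have "\<dots> = real ?d * sqrt (L / real ?d)"
          by (subst real_sqrt_mult) simp
        finally show ?thesis unfolding s_def by simp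
      qed
      finally show "infnorm (zo_adamm_grad f X mu alpha beta1 beta2 x1 m0 v0 vh0 u t)
                \<le> 2 * Lc * sqrt (real CARD('n) * ln (real CARD('n) * real T / delta))"
        unfolding L_def .
    qed
  qed
qed

end
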